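(* Let $(\mathbf d_n)$ be a family of degree sequences and $v_n\in[n]$. Assume, as $n\to\infty$, \[\sigma^2(\mathbf d_n)=o\Big(\frac{n}{(\log n)^3}\Big),\quad \sigma^2(\mathbf d_n)=\omega\Big(\frac{\log n}{n^{1/3}}\Big),\quad \Delta(\mathbf d_n)=o\Big(\sqrt{\frac{n\sigma^2(\mathbf d_n)}{(\log n)^3}}\Big).\] Then $\lim_{n\to\infty}\mathbb P(\mathfrak t_n(v_n)=0)=0$.
   Context: A degree sequence is $\mathbf d_n=(d_{n,1},\ldots,d_{n,n})\in\mathbb N_0^n$ with $\sum_j d_{n,j}=n$. Let $\mathfrak F(\mathbf d_n)=\{f:[n]\to[n]: |f^{-1}(\{i\})|=d_{n,i}\ \forall i\}$ and $F$ uniform on $\mathfrak F(\mathbf d_n)$. For $f:V\to V$, $v\in V$: six-length $\mathfrak s_f(v)=\min\{k\in\mathbb N: f^{(k)}(v)\in\{f^{(j)}(v):0\le j\le k-1\}\}$; tail-length $\mathfrak t_f(v)$ is the unique integer with $0\le\mathfrak t_f(v)<\mathfrak s_f(v)$ and $f^{(\mathfrak s_f(v))}(v)=f^{(\mathfrak t_f(v))}(v)$. $\mathfrak t_n(v)=\mathfrak t_F(v)$. $\Delta(\mathbf d_n)=\max_j d_{n,j}$, $\sigma^2(\mathbf d_n)=\frac1n\sum_j d_{n,j}^2-1$. $a_n=\omega(b_n)$ means $b_n=o(a_n)$. *)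

theory Defs
  imports "HOL-Analysis.Analysis" "HOL-Library.Landau_Symbols" "HOL-Library.FuncSet"
begin

text \<open>A degree sequence of length n is d :: nat \<Rightarrow> nat, read on the index set {1..n}.\<close>
definition is_degree_seq :: "nat \<Rightarrow> (nat \<Rightarrow> nat) \<Rightarrow> bool" where
  "is_degree_seq n d \<longleftrightarrow> (\<Sum>j=1..n. d j) = n"

definition deg_funs :: "nat \<Rightarrow> (nat \<Rightarrow> nat) \<Rightarrow> (nat \<Rightarrow> nat) set" where
  "deg_funs n d = {f \<in> {1..n} \<rightarrow>\<^sub>E {1..n}. \<forall>i\<in>{1..n}. card {j\<in>{1..n}. f j = i} = d i}"

definition rho_len :: "('a \<Rightarrow> 'a) \<Rightarrow> 'a \<Rightarrow> nat" where
  "rho_len f v = (LEAST k. k \<ge> 1 \<and> (f ^^ k) v \<in> {(f ^^ j) v | j. j < k})"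

definition tail_len :: "('a \<Rightarrow> 'a) \<Rightarrow> 'a \<Rightarrow> nat" where
  "tail_len f v = (THE t. t < rho_len f v \<and> (f ^^ rho_len f v) v = (f ^^ t) v)"

definition Delta :: "nat \<Rightarrow> (nat \<Rightarrow> nat) \<Rightarrow> nat" where
  "Delta n d = Max (d ` {1..n})"

definition sigma2 :: "nat \<Rightarrow> (nat \<Rightarrow> nat) \<Rightarrow> real" where
  "sigma2 n d = (\<Sum>j=1..n. real (d j) ^ 2) / real n - 1"

definition prob_tail0 :: "nat \<Rightarrow> (nat \<Rightarrow> nat) \<Rightarrow> nat \<Rightarrow> real" where
  "prob_tail0 n d v = real (card {f \<in> deg_funs n d. tail_len f v = 0}) / real (card (deg_funs n d))"

end

theory Submission
  imports Defs "HOL-Combinatorics.Multiset_Permutations" "HOL-Real_Asymp.Real_Asymp"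
begin


lemma Gamma_nat1: "Gamma (real j + 1) = fact j"
  using Gamma_of_int[of "int j + 1"] by simp

lemma beta_nat:
  "((\<lambda>t::real. t^j * (1-t)^m) has_integral (fact j * fact m / fact (j+m+1))) {0..1}"
proof -
  have "((\<lambda>t. t powr (real j + 1 - 1) * (1 - t) powr (real m + 1 - 1)) has_integral Beta (real j + 1) (real m + 1)) {0..1}"
    by (rule has_integral_Beta_real) auto
  hence "((\<lambda>t. t powr (real j + 1 - 1) * (1 - t) powr (real m + 1 - 1)) has_integral Beta (real j + 1) (real m + 1)) {0<..<1}"
    by (simp add: has_integral_Icc_iff_Ioo)
  hence "((\<lambda>t::real. t^j * (1-t)^m) has_integral Beta (real j + 1) (real m + 1)) {0<..<1}"
    by (rule has_integral_eq[rotated]) (simp add: powr_realpow)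
  moreover have "Beta (real j + 1) (real m + 1) = fact j * fact m / fact (j+m+1)"
    unfolding Beta_def using Gamma_nat1[of j] Gamma_nat1[of m] Gamma_nat1[of "j+m+1"]
    by (simp add: add_ac)
  ultimately show ?thesis by (simp add: has_integral_Icc_iff_Ioo)
qed


lemma one_plus_le_exp:
  fixes x M :: real
  assumes M: "0 \<le> M" and x1: "-1 \<le> x" and xM: "x \<le> M"
  shows "1 + x \<le> exp (x - x^2 / (2 * (1 + M)))"
proof (cases "x = -1")
  case True then show ?thesis by simp
next
  case False
  hence xg: "x > -1" using x1 by simp
  define g where "g y = y - y^2 / (2 * (1 + M)) - ln (1 + y)" for y :: real
  have der: "DERIV g y :> (1 - y / (1 + M) - 1 / (1 + y))" if "y > -1" for y
  proof -
    have d1: "((\<lambda>y. y^2 / (2 * (1 + M))) has_real_derivative (2 * y / (2 * (1 + M)))) (at y)"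
      using DERIV_cdivide[OF DERIV_pow[of 2 y], of "2 * (1 + M)"] by simp
    have d2: "((\<lambda>y. ln (1 + y)) has_real_derivative (1 / (1 + y))) (at y)"
      using that by (auto intro!: derivative_eq_intros)
    have "DERIV (\<lambda>y. y - y^2 / (2 * (1 + M)) - ln (1 + y)) y :> (1 - 2 * y / (2 * (1 + M)) - 1 / (1 + y))"
      by (intro DERIV_diff DERIV_ident d1 d2)
    moreover have "2 * y / (2 * (1 + M)) = y / (1 + M)" using M by (simp add: field_simps)
    ultimately show ?thesis unfolding g_def by simp
  qed
  have gval: "1 - y / (1 + M) - 1 / (1 + y) = y * (M - y) / ((1 + M) * (1 + y))" if "y > -1" for y
    using that M by (simp add: field_simps)
  have "g 0 \<le> g x"
  proof (cases "x \<ge> 0")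
    case True
    show ?thesis
    proof (rule DERIV_nonneg_imp_nondecreasing[OF True])
      fix y assume y: "0 \<le> y" "y \<le> x"
      have "y * (M - y) / ((1 + M) * (1 + y)) \<ge> 0" using y xM M by (intro divide_nonneg_nonneg) auto
      then show "\<exists>z. DERIV g y :> z \<and> 0 \<le> z" using der[of y] gval[of y] y by auto
    qed
  next
    case False
    have "(\<lambda>y. - g y) x \<le> (\<lambda>y. - g y) 0"
    proof (rule DERIV_nonneg_imp_nondecreasing[where f="\<lambda>y. - g y"])
      show "x \<le> 0" using False by simp
      fix y assume y: "x \<le> y" "y \<le> 0"
      have yg: "y > -1" using y xg by simp
      have "y * (M - y) / ((1 + M) * (1 + y)) \<le> 0"
        using y yg M by (intro divide_nonpos_pos mult_nonpos_nonneg) auto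
      then show "\<exists>z. DERIV (\<lambda>y. - g y) y :> z \<and> 0 \<le> z"
        using DERIV_minus[OF der[OF yg]] gval[OF yg] by (intro exI[of _ "- (1 - y / (1 + M) - 1 / (1 + y))"]) auto
    qed
    then show ?thesis by simp
  qed
  hence "ln (1 + x) \<le> x - x^2 / (2 * (1 + M))" unfolding g_def by simp
  hence "exp (ln (1 + x)) \<le> exp (x - x^2 / (2 * (1 + M)))" by simp
  then show ?thesis using xg by simp
qed

lemma exp_split_bound:
  fixes B D t :: real
  assumes B: "0 \<le> B" and D: "1 \<le> D" and t: "0 \<le> t" "t \<le> 1"
  shows "exp (- (B * t^2 / (2 * (1 + D * t)))) \<le> 1 / (1 + B * t^2 / 4) + exp (- (B / (4 * D^2)))"
proof (cases "D * t \<le> 1")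
  case True
  have "B * t^2 / 4 \<le> B * t^2 / (2 * (1 + D * t))"
    using True B t D by (intro divide_left_mono mult_nonneg_nonneg) (auto simp: add_pos_nonneg)
  hence "exp (- (B * t^2 / (2 * (1 + D * t)))) \<le> exp (- (B * t^2 / 4))" by simp
  also have "\<dots> \<le> 1 / (1 + B * t^2 / 4)"
  proof -
    have "1 + B * t^2 / 4 \<le> exp (B * t^2 / 4)" by (rule exp_ge_add_one_self)
    moreover have "0 < 1 + B * t^2 / 4" using B by (simp add: add_pos_nonneg)
    ultimately show ?thesis by (simp add: exp_minus field_simps)
  qed
  finally show ?thesis by (smt (verit) exp_gt_zero)
next
  case False
  have tpos: "t > 0" using False t D by (cases "t = 0") auto
  have "B / (4 * D^2) \<le> B * t^2 / (2 * (1 + D * t))"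
  proof -
    have "1 / (4 * D^2) \<le> t^2 / (2 * (1 + D * t))"
    proof -
      have "2 * (1 + D * t) \<le> 4 * D * t" using False by simp
      also have "\<dots> \<le> 4 * D^2 * t^2" using False D t
        by (simp add: power2_eq_square) (smt (verit) mult_le_cancel_left1 mult.assoc mult.commute)
      finally have "2 * (1 + D * t) \<le> 4 * D^2 * t^2" .
      moreover have "0 < 4 * D^2" "0 < 2 * (1 + D * t)" using D tpos by (auto simp: add_pos_pos)
      ultimately show ?thesis by (simp add: divide_simps) (simp add: mult_ac)
    qed
    then show ?thesis using B by (metis mult_left_mono times_divide_eq_right mult_1_right)
  qed
  hence "exp (- (B * t^2 / (2 * (1 + D * t)))) \<le> exp (- (B / (4 * D^2)))" by simp
  moreover have "0 \<le> 1 / (1 + B * t^2 / 4)" using B by (simp add: add_nonneg_nonneg)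
  ultimately show ?thesis by linarith
qed

lemma arctan_integral:
  fixes B :: real
  assumes B: "B > 0"
  shows "((\<lambda>t. 1 / (1 + B * t^2 / 4)) has_integral (2 / sqrt B * arctan (sqrt B / 2))) {0..1}"
proof -
  have "((\<lambda>t. 1 / (1 + B * t^2 / 4)) has_integral (2 / sqrt B * arctan (sqrt B * 1 / 2) - 2 / sqrt B * arctan (sqrt B * 0 / 2))) {0..1}"
  proof (rule fundamental_theorem_of_calculus)
    fix x :: real assume "x \<in> {0..1}"
    have "((\<lambda>x. 2 / sqrt B * arctan (sqrt B * x / 2)) has_real_derivative
           (2 / sqrt B * (inverse (1 + (sqrt B * x / 2)^2) * (sqrt B / 2)))) (at x within {0..1})"
      using B by (auto intro!: derivative_eq_intros) (simp add: mult.assoc)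
    moreover have "2 / sqrt B * (inverse (1 + (sqrt B * x / 2)^2) * (sqrt B / 2)) = 1 / (1 + B * x^2 / 4)"
    proof -
      have e1: "(sqrt B * x / 2)^2 = B * x^2 / 4" using B by (simp add: power_mult_distrib power_divide)
      have e2: "2 / sqrt B * (sqrt B / 2) = 1" using B by simp
      have "2 / sqrt B * (inverse (1 + (sqrt B * x / 2)^2) * (sqrt B / 2)) = (2 / sqrt B * (sqrt B / 2)) * inverse (1 + (sqrt B * x / 2)^2)"
        by (simp only: ac_simps)
      also have "\<dots> = 1 / (1 + B * x^2 / 4)" by (simp only: e1 e2 mult_1 inverse_eq_divide)
      finally show ?thesis .
    qed
    ultimately have "((\<lambda>x. 2 / sqrt B * arctan (sqrt B * x / 2)) has_real_derivative
           (1 / (1 + B * x^2 / 4))) (at x within {0..1})" by (simp only:)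
    then show "((\<lambda>x. 2 / sqrt B * arctan (sqrt B * x / 2)) has_vector_derivative
           (1 / (1 + B * x^2 / 4))) (at x within {0..1})"
      by (simp only: has_real_derivative_iff_has_vector_derivative)
  qed simp
  then show ?thesis by simp
qed

lemma arctan_integral_bound:
  fixes B :: real
  assumes B: "B > 0"
  shows "2 / sqrt B * arctan (sqrt B / 2) \<le> pi / sqrt B"
proof -
  have "arctan (sqrt B / 2) \<le> pi / 2" using arctan_ubound[of "sqrt B / 2"] by simp
  then show ?thesis using B by (simp add: field_simps)
qed


definition DS :: "nat set \<Rightarrow> nat set \<Rightarrow> (nat \<Rightarrow> nat) \<Rightarrow> (nat \<Rightarrow> nat) set" where
  "DS T S c = {f \<in> S \<rightarrow>\<^sub>E T. \<forall>i\<in>T. card {j\<in>S. f j = i} = c i}"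

definition CS :: "nat set \<Rightarrow> nat set \<Rightarrow> (nat \<Rightarrow> nat) \<Rightarrow> (nat \<times> nat) list \<Rightarrow> (nat \<Rightarrow> nat) set" where
  "CS T S c ps = {f \<in> DS T S c. \<forall>(x,y)\<in>set ps. f x = y}"

fun ff :: "nat \<Rightarrow> nat \<Rightarrow> nat" where
  "ff m 0 = 1" | "ff m (Suc k) = m * ff (m - 1) k"

lemma ff_fact: "k \<le> m \<Longrightarrow> ff m k * fact (m - k) = (fact m :: nat)"
proof (induction k arbitrary: m)
  case 0 then show ?case by simp
next
  case (Suc k)
  have ih: "ff (m - 1) k * fact (m - 1 - k) = (fact (m - 1) :: nat)" using Suc by (intro Suc.IH) simp
  have e: "m - Suc k = m - 1 - k" by simp
  have fr: "fact m = m * (fact (m - 1) :: nat)" using Suc.prems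
    using fact_reduce[of m, where 'a=nat] by simp
  have "ff m (Suc k) * fact (m - Suc k) = m * (ff (m - 1) k * fact (m - 1 - k))"
    by (simp only: ff.simps e mult.assoc)
  also have "\<dots> = m * fact (m - 1)" by (simp only: ih)
  also have "\<dots> = fact m" by (simp only: fr)
  finally show ?case .
qed

lemma finite_DS: "finite S \<Longrightarrow> finite T \<Longrightarrow> finite (DS T S c)"
proof -
  assume S: "finite S" and T: "finite T"
  have "DS T S c \<subseteq> S \<rightarrow>\<^sub>E T" by (auto simp: DS_def)
  moreover have "finite (S \<rightarrow>\<^sub>E T)" using S T by (intro finite_PiE) auto
  ultimately show ?thesis by (rule finite_subset)
qed

definition swp :: "nat \<Rightarrow> nat \<Rightarrow> nat \<Rightarrow> nat" where
  "swp a a' x = (if x = a then a' else if x = a' then a else x)"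

lemma swp_swp[simp]: "swp a a' (swp a a' x) = x"
  unfolding swp_def by auto

lemma DS_swp:
  assumes f: "f \<in> DS T S c" and a: "a \<in> S" and a': "a' \<in> S"
  shows "f \<circ> swp a a' \<in> DS T S c"
proof -
  have pi: "f \<in> S \<rightarrow>\<^sub>E T" and fib: "\<And>i. i \<in> T \<Longrightarrow> card {j\<in>S. f j = i} = c i"
    using f unfolding DS_def by auto
  have "f \<circ> swp a a' \<in> S \<rightarrow>\<^sub>E T"
    using pi a a' unfolding swp_def PiE_def Pi_def extensional_def by auto
  moreover have "card {j\<in>S. (f \<circ> swp a a') j = i} = c i" if i: "i \<in> T" for i
  proof -
    have "{j\<in>S. (f \<circ> swp a a') j = i} = swp a a' ` {j\<in>S. f j = i}"
    proof (rule set_eqI)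
      fix j
      have e1: "j \<in> swp a a' ` {j\<in>S. f j = i} \<longleftrightarrow> swp a a' j \<in> {j\<in>S. f j = i}"
      proof
        assume "j \<in> swp a a' ` {j\<in>S. f j = i}"
        then obtain y where "y \<in> {j\<in>S. f j = i}" "j = swp a a' y" by blast
        then show "swp a a' j \<in> {j\<in>S. f j = i}" by simp
      next
        assume "swp a a' j \<in> {j\<in>S. f j = i}"
        then have "swp a a' (swp a a' j) \<in> swp a a' ` {j\<in>S. f j = i}" by (rule imageI)
        then show "j \<in> swp a a' ` {j\<in>S. f j = i}" by simp
      qed
      have e2: "swp a a' j \<in> S \<longleftrightarrow> j \<in> S" using a a' by (auto simp: swp_def)
      show "j \<in> {j\<in>S. (f \<circ> swp a a') j = i} \<longleftrightarrow> j \<in> swp a a' ` {j\<in>S. f j = i}"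
        using e1 e2 by auto
    qed
    moreover have "inj (swp a a')" by (metis injI swp_swp)
    ultimately show ?thesis using fib[OF i] by (simp add: card_image inj_on_subset)
  qed
  ultimately show ?thesis unfolding DS_def by auto
qed

lemma card_fix_le:
  assumes "finite S" "finite T" "a \<in> S" "a' \<in> S"
  shows "card {f\<in>DS T S c. f a = b} \<le> card {f\<in>DS T S c. f a' = b}"
proof (rule card_inj_on_le[where f = "\<lambda>f. f \<circ> swp a a'"])
  show "inj_on (\<lambda>f. f \<circ> swp a a') {f \<in> DS T S c. f a = b}"
  proof (rule inj_onI)
    fix f g assume "f \<circ> swp a a' = g \<circ> swp a a'"
    then have "\<And>x. f (swp a a' (swp a a' x)) = g (swp a a' (swp a a' x))"
      by (metis comp_apply)
    then show "f = g" by auto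
  qed
  show "(\<lambda>f. f \<circ> swp a a') ` {f \<in> DS T S c. f a = b} \<subseteq> {f \<in> DS T S c. f a' = b}"
    using DS_swp assms by (auto simp: swp_def)
  show "finite {f \<in> DS T S c. f a' = b}" using finite_DS assms by auto
qed

lemma card_filter_sum: "finite A \<Longrightarrow> card {x\<in>A. P x} = (\<Sum>x\<in>A. if P x then 1 else 0)"
proof -
  assume A: "finite A"
  show ?thesis by (simp only: card_eq_sum sum.inter_filter[OF A])
qed

lemma fix_one:
  assumes S: "finite S" and T: "finite T" and a: "a \<in> S" and b: "b \<in> T"
  shows "card {f\<in>DS T S c. f a = b} * card S = c b * card (DS T S c)"
proof -
  have eq: "card {f\<in>DS T S c. f a' = b} = card {f\<in>DS T S c. f a = b}" if "a' \<in> S" for a'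
    using card_fix_le[OF S T a that, where c=c and b=b] card_fix_le[OF S T that a, where c=c and b=b] by (rule antisym[rotated])
  have "card {f\<in>DS T S c. f a = b} * card S = (\<Sum>a'\<in>S. card {f\<in>DS T S c. f a' = b})"
    using eq by simp
  also have "\<dots> = (\<Sum>a'\<in>S. \<Sum>f\<in>DS T S c. if f a' = b then 1 else 0)"
    using finite_DS[OF S T] by (simp add: card_filter_sum)
  also have "\<dots> = (\<Sum>f\<in>DS T S c. \<Sum>a'\<in>S. if f a' = b then 1 else 0)"
    by (rule sum.swap)
  also have "\<dots> = (\<Sum>f\<in>DS T S c. c b)"
  proof (rule sum.cong[OF refl])
    fix f assume "f \<in> DS T S c"
    then have "card {j\<in>S. f j = b} = c b" using b unfolding DS_def by auto
    then show "(\<Sum>a'\<in>S. if f a' = b then 1 else 0) = c b" using S by (simp add: card_filter_sum)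
  qed
  also have "\<dots> = c b * card (DS T S c)" by simp
  finally show ?thesis .
qed

lemma restrict_one:
  assumes S: "finite S" and a: "a \<in> S" and b: "b \<in> T" and cb: "c b \<ge> 1"
  shows "card {f\<in>DS T S c. f a = b \<and> P f} = card {g\<in>DS T (S - {a}) (c(b := c b - 1)). P (g(a := b))}"
proof -
  let ?c' = "c(b := c b - 1)"
  let ?R = "{g\<in>DS T (S - {a}) ?c'. P (g(a := b))}"
  have inj: "inj_on (\<lambda>g. g(a := b)) ?R"
  proof (rule inj_onI)
    fix g h assume g: "g \<in> ?R" and h: "h \<in> ?R" and e: "g(a := b) = h(a := b)"
    have "g a = undefined" "h a = undefined" using g h unfolding DS_def PiE_def extensional_def by auto
    then show "g = h" using e by (metis fun_upd_idem_iff fun_upd_upd)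
  qed
  have img: "(\<lambda>g. g(a := b)) ` ?R = {f\<in>DS T S c. f a = b \<and> P f}"
  proof (rule subset_antisym)
   show "(\<lambda>g. g(a := b)) ` ?R \<subseteq> {f\<in>DS T S c. f a = b \<and> P f}"
   proof (rule image_subsetI)
    fix g assume "g \<in> ?R"
    then have g: "g \<in> DS T (S - {a}) ?c'" "P (g(a := b))" by auto
    have pi: "g \<in> (S - {a}) \<rightarrow>\<^sub>E T" and fib: "\<And>i. i \<in> T \<Longrightarrow> card {j\<in>S - {a}. g j = i} = ?c' i"
      using g unfolding DS_def by auto
    have "g(a := b) \<in> S \<rightarrow>\<^sub>E T" using pi a b unfolding PiE_def Pi_def extensional_def by auto
    moreover have "card {j\<in>S. (g(a := b)) j = i} = c i" if i: "i \<in> T" for i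
    proof (cases "i = b")
      case True
      have "{j\<in>S. (g(a := b)) j = i} = insert a {j\<in>S - {a}. g j = i}" using True a by auto
      moreover have "finite {j\<in>S - {a}. g j = i}" using S by auto
      ultimately show ?thesis using fib[OF i] True cb by simp
    next
      case False
      have "{j\<in>S. (g(a := b)) j = i} = {j\<in>S - {a}. g j = i}" using False a by auto
      then show ?thesis using fib[OF i] False by simp
    qed
    ultimately have "g(a := b) \<in> DS T S c" unfolding DS_def by auto
    then show "g(a := b) \<in> {f\<in>DS T S c. f a = b \<and> P f}" using g by simp
   qed
  next
   show "{f\<in>DS T S c. f a = b \<and> P f} \<subseteq> (\<lambda>g. g(a := b)) ` ?R"
   proof (rule subsetI)
    fix f assume "f \<in> {f\<in>DS T S c. f a = b \<and> P f}"
    then have f: "f \<in> DS T S c" and fa: "f a = b" and Pf: "P f" by auto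
    have pi: "f \<in> S \<rightarrow>\<^sub>E T" and fib: "\<And>i. i \<in> T \<Longrightarrow> card {j\<in>S. f j = i} = c i"
      using f unfolding DS_def by auto
    let ?g = "f(a := undefined)"
    have "?g \<in> (S - {a}) \<rightarrow>\<^sub>E T" using pi unfolding PiE_def Pi_def extensional_def by auto
    moreover have "card {j\<in>S - {a}. ?g j = i} = ?c' i" if i: "i \<in> T" for i
    proof (cases "i = b")
      case True
      have "{j\<in>S - {a}. ?g j = i} = {j\<in>S. f j = i} - {a}" by auto
      moreover have "a \<in> {j\<in>S. f j = i}" using a fa True by auto
      ultimately show ?thesis using fib[OF i] True S by simp
    next
      case False
      have "{j\<in>S - {a}. ?g j = i} = {j\<in>S. f j = i}" using False fa by auto
      then show ?thesis using fib[OF i] False by simp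
    qed
    ultimately have "?g \<in> DS T (S - {a}) ?c'" unfolding DS_def by auto
    moreover have "?g(a := b) = f" using fa by auto
    ultimately show "f \<in> (\<lambda>g. g(a := b)) ` ?R" using Pf by (intro image_eqI[of _ _ ?g]) auto
   qed
  qed
  show ?thesis using card_image[OF inj] img by simp
qed

lemma count_constraints:
  assumes "finite S" "finite T" "set (map fst ps) \<subseteq> S" "set (map snd ps) \<subseteq> T"
    "distinct (map fst ps)" "distinct (map snd ps)"
  shows "card (CS T S c ps) * ff (card S) (length ps) = prod_list (map (c \<circ> snd) ps) * card (DS T S c)"
  using assms
proof (induction ps arbitrary: S c)
  case Nil
  then show ?case by (simp add: CS_def)
next
  case (Cons p ps)
  obtain a b where p: "p = (a, b)" by (cases p)
  have a: "a \<in> S" and b: "b \<in> T" using Cons.prems p by auto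
  have CS_eq: "CS T S c (p # ps) = {f\<in>DS T S c. f a = b \<and> (\<forall>(x,y)\<in>set ps. f x = y)}"
    unfolding CS_def p by auto
  show ?case
  proof (cases "c b = 0")
    case True
    have "CS T S c (p # ps) = {}"
    proof -
      have False if f: "f \<in> DS T S c" and fa: "f a = b" for f
      proof -
        have "card {j\<in>S. f j = b} = 0" using f b True unfolding DS_def by auto
        moreover have "a \<in> {j\<in>S. f j = b}" using a fa by auto
        ultimately show False using Cons.prems(1) by auto
      qed
      then show ?thesis unfolding CS_eq by auto
    qed
    then show ?thesis using True p by simp
  next
    case False
    let ?c' = "c(b := c b - 1)"
    have cb: "c b \<ge> 1" using False by simp
    have anot: "a \<notin> set (map fst ps)" and bnot: "b \<notin> set (map snd ps)" using Cons.prems p by auto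
    have "card (CS T S c (p # ps)) = card {g\<in>DS T (S - {a}) ?c'. \<forall>(x,y)\<in>set ps. (g(a := b)) x = y}"
      unfolding CS_eq by (rule restrict_one[where S=S and T=T and a=a and b=b and c=c]) (use Cons.prems(1) a b cb in auto)
    also have "{g\<in>DS T (S - {a}) ?c'. \<forall>(x,y)\<in>set ps. (g(a := b)) x = y} = CS T (S - {a}) ?c' ps"
      unfolding CS_def using anot by (force)
    finally have c1: "card (CS T S c (p # ps)) = card (CS T (S - {a}) ?c' ps)" .
    have IH: "card (CS T (S - {a}) ?c' ps) * ff (card (S - {a})) (length ps) =
        prod_list (map (?c' \<circ> snd) ps) * card (DS T (S - {a}) ?c')"
      using Cons.prems p by (intro Cons.IH) auto
    have pr: "prod_list (map (?c' \<circ> snd) ps) = prod_list (map (c \<circ> snd) ps)"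
    proof -
      have "map (?c' \<circ> snd) ps = map (c \<circ> snd) ps" using bnot by (intro map_cong) (auto simp: image_iff)
      then show ?thesis by (rule arg_cong)
    qed
    have dsc: "card (DS T (S - {a}) ?c') = card {f\<in>DS T S c. f a = b}"
      using restrict_one[where S=S and T=T and a=a and b=b and c=c and P="\<lambda>_. True"] Cons.prems(1) a b cb by simp
    have fo: "card {f\<in>DS T S c. f a = b} * card S = c b * card (DS T S c)"
      by (rule fix_one[OF Cons.prems(1,2) a b])
    have cS: "card (S - {a}) = card S - 1" using a Cons.prems(1) by simp
    have "card (CS T S c (p # ps)) * ff (card S) (length (p # ps))
        = card S * (card (CS T (S - {a}) ?c' ps) * ff (card (S - {a})) (length ps))"
      using c1 cS by simp
    also have "\<dots> = prod_list (map (c \<circ> snd) ps) * (card {f\<in>DS T S c. f a = b} * card S)"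
      using IH pr dsc by simp
    also have "\<dots> = prod_list (map (c \<circ> snd) (p # ps)) * card (DS T S c)"
      using fo p by simp
    finally show ?thesis .
  qed
qed


lemma cyc_of_tail0:
  fixes n v :: nat and f :: "nat \<Rightarrow> nat"
  assumes f: "f \<in> {1..n} \<rightarrow>\<^sub>E {1..n}" and v: "v \<in> {1..n}" and t0: "tail_len f v = 0"
  shows "\<exists>ys. distinct ys \<and> set ys \<subseteq> {1..n} - {v} \<and> (\<forall>(x,y)\<in>set (zip (v#ys) (ys@[v])). f x = y)"
proof -
  define g where "g j = (f ^^ j) v" for j
  have gN: "g j \<in> {1..n}" for j
  proof (induction j)
    case 0 then show ?case using v by (simp add: g_def)
  next
    case (Suc j) then show ?case using f unfolding g_def by auto
  qed
  have gS: "g (Suc j) = f (g j)" for j by (simp add: g_def)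
  define P where "P k \<longleftrightarrow> k \<ge> 1 \<and> g k \<in> {g j | j. j < k}" for k
  have exP: "\<exists>k. P k"
  proof -
    have "\<not> inj_on g {0..n}"
    proof
      assume "inj_on g {0..n}"
      then have "card {0..n} \<le> card {1..n}" by (rule card_inj_on_le) (use gN in auto)
      then show False by simp
    qed
    then obtain i j where ij: "i \<in> {0..n}" "j \<in> {0..n}" "i \<noteq> j" "g i = g j"
      unfolding inj_on_def by blast
    show ?thesis
    proof (cases "i < j")
      case True then show ?thesis using ij unfolding P_def by (intro exI[of _ j]) (auto intro!: exI[of _ i])
    next
      case False then show ?thesis using ij unfolding P_def by (intro exI[of _ i]) (auto intro!: exI[of _ j])
    qed
  qed
  define rho where "rho = (LEAST k. P k)"
  have rho_eq: "rho_len f v = rho" unfolding rho_len_def rho_def P_def g_def by simp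
  have Prho: "P rho" unfolding rho_def by (rule LeastI_ex[OF exP])
  have dist: "g i \<noteq> g j" if "i < j" "j < rho" for i j
  proof
    assume "g i = g j"
    then have "P j" using that unfolding P_def by (auto intro!: exI[of _ i])
    then have "rho \<le> j" unfolding rho_def by (rule Least_le)
    then show False using that by simp
  qed
  have rho1: "rho \<ge> 1" using Prho unfolding P_def by simp
  obtain t where t: "t < rho" "g rho = g t" using Prho unfolding P_def by auto
  have "tail_len f v = t"
    unfolding tail_len_def rho_eq
  proof (rule the_equality)
    show "t < rho \<and> (f ^^ rho) v = (f ^^ t) v" using t by (simp add: g_def)
  next
    fix t' assume "t' < rho \<and> (f ^^ rho) v = (f ^^ t') v"
    then have t': "t' < rho" "g t' = g t" using t by (auto simp: g_def)
    show "t' = t"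
    proof (rule ccontr)
      assume "t' \<noteq> t"
      then consider "t' < t" | "t < t'" by linarith
      then show False using dist t t' by (cases) (metis, metis)
    qed
  qed
  then have "t = 0" using t0 by simp
  then have grho: "g rho = v" using t by (simp add: g_def)
  define ys where "ys = map g [1..<rho]"
  have inj: "inj_on g {0..<rho}"
    by (rule inj_onI) (metis atLeastLessThan_iff dist linorder_neqE_nat)
  have "distinct ys" unfolding ys_def
    by (simp add: distinct_map) (rule inj_on_subset[OF inj], auto)
  moreover have "set ys \<subseteq> {1..n} - {v}"
  proof
    fix x assume "x \<in> set ys"
    then obtain j where j: "1 \<le> j" "j < rho" "x = g j" unfolding ys_def by auto
    have "g 0 \<noteq> g j" using dist[of 0 j] j by simp
    then show "x \<in> {1..n} - {v}" using gN j by (simp add: g_def)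
  qed
  moreover have "\<forall>(x,y)\<in>set (zip (v#ys) (ys@[v])). f x = y"
  proof -
    have e1: "v # ys = map g [0..<rho]" unfolding ys_def using rho1
      by (simp add: g_def upt_conv_Cons)
    have "ys @ [v] = map g [1..<Suc rho]" unfolding ys_def using rho1 grho by simp
    also have "\<dots> = map (\<lambda>j. g (Suc j)) [0..<rho]"
    proof -
      have "[1..<Suc rho] = map Suc [0..<rho]" by (simp add: map_Suc_upt)
      then show ?thesis by simp
    qed
    finally have e2: "ys @ [v] = map (\<lambda>j. g (Suc j)) [0..<rho]" .
    show ?thesis unfolding e1 e2 by (auto simp: zip_map_map zip_same_conv_map gS)
  qed
  ultimately show ?thesis by blast
qed


lemma deg_funs_DS: "deg_funs n d = DS {1..n} {1..n} d"
  unfolding deg_funs_def DS_def by simp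

lemma ff_pos: "k \<le> m \<Longrightarrow> ff m k > 0"
  using ff_fact[of k m] by (metis fact_gt_zero gr0I mult_0)

lemma L_eq: "finite M \<Longrightarrow> {ys. distinct ys \<and> set ys \<subseteq> M} = (\<Union>J\<in>Pow M. permutations_of_set J)"
  by (auto simp: permutations_of_set_def)

lemma prob_le_sum:
  fixes n v :: nat and d :: "nat \<Rightarrow> nat"
  assumes v: "v \<in> {1..n}"
  shows "prob_tail0 n d v \<le> (\<Sum>ys\<in>{ys. distinct ys \<and> set ys \<subseteq> {1..n} - {v}}.
            real (d v) * real (prod_list (map d ys)) / real (ff n (Suc (length ys))))"
proof -
  define N where "N = {1..n::nat}"
  define M where "M = N - {v}"
  define L where "L = {ys. distinct ys \<and> set ys \<subseteq> M}"
  define C where "C ys = CS N N d (zip (v#ys) (ys@[v]))" for ys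
  define A where "A = {f \<in> deg_funs n d. tail_len f v = 0}"
  have finM: "finite M" unfolding M_def N_def by simp
  have finL: "finite L" unfolding L_def using L_eq[OF finM] finM by (simp add: finite_UN_I)
  have vN: "v \<in> N" using v unfolding N_def by simp
  have AC: "A \<subseteq> (\<Union>ys\<in>L. C ys)"
  proof
    fix f assume "f \<in> A"
    then have fD: "f \<in> DS N N d" and t0: "tail_len f v = 0"
      unfolding A_def deg_funs_DS N_def by auto
    then have "f \<in> {1..n} \<rightarrow>\<^sub>E {1..n}" unfolding DS_def N_def by auto
    from cyc_of_tail0[OF this v t0] obtain ys where
      ys: "distinct ys" "set ys \<subseteq> {1..n} - {v}" "\<forall>(x,y)\<in>set (zip (v#ys) (ys@[v])). f x = y" by blast
    then have "ys \<in> L" unfolding L_def M_def N_def by auto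
    moreover have "f \<in> C ys" unfolding C_def CS_def using fD ys(3) by auto
    ultimately show "f \<in> (\<Union>ys\<in>L. C ys)" by blast
  qed
  have finC: "finite (C ys)" for ys
    unfolding C_def CS_def using finite_DS[of N N d] unfolding N_def by auto
  have cardA: "card A \<le> (\<Sum>ys\<in>L. card (C ys))"
    using card_mono[OF finite_UN_I[OF finL finC] AC] card_UN_le[OF finL, of C] by linarith
  have cardC: "real (card (C ys)) = real (d v) * real (prod_list (map d ys)) * real (card (DS N N d)) / real (ff n (Suc (length ys)))"
    if ys: "ys \<in> L" for ys
  proof -
    have dys: "distinct ys" and sys: "set ys \<subseteq> M" using ys unfolding L_def by auto
    have vys: "v \<notin> set ys" using sys unfolding M_def by auto
    have len: "length ys \<le> n - 1"
    proof -
      have "length ys = card (set ys)" using dys by (simp add: distinct_card)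
      also have "\<dots> \<le> card M" using sys finM by (rule card_mono[rotated])
      also have "card M = n - 1" unfolding M_def N_def using v by simp
      finally show ?thesis .
    qed
    have n1: "n \<ge> 1" using v by simp
    let ?ps = "zip (v#ys) (ys@[v])"
    have mf: "map fst ?ps = v # ys" by simp
    have ms: "map snd ?ps = ys @ [v]" by simp
    have cc: "card (C ys) * ff (card N) (length ?ps) = prod_list (map (d \<circ> snd) ?ps) * card (DS N N d)"
      unfolding C_def
      by (rule count_constraints) (use vN sys vys dys in \<open>auto simp: N_def M_def mf ms\<close>)
    have pl: "prod_list (map (d \<circ> snd) ?ps) = d v * prod_list (map d ys)"
    proof -
      have "map (d \<circ> snd) ?ps = map d (ys @ [v])" using ms by (metis map_map)
      then show ?thesis by simp
    qed
    have cN: "card N = n" unfolding N_def by simp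
    have lp: "length ?ps = Suc (length ys)" by simp
    have pos: "ff n (Suc (length ys)) > 0" using len n1 by (intro ff_pos) linarith
    have "real (card (C ys)) * real (ff n (Suc (length ys))) = real (d v) * real (prod_list (map d ys)) * real (card (DS N N d))"
      using cc unfolding pl cN lp by (metis of_nat_mult)
    moreover have "real (ff n (Suc (length ys))) \<noteq> 0" using pos by simp
    ultimately show ?thesis by (simp only: eq_divide_eq if_True not_False_eq_True)
  qed
  show ?thesis
  proof (cases "card (DS N N d) = 0")
    case True
    then have "prob_tail0 n d v = 0" unfolding prob_tail0_def deg_funs_DS N_def by simp
    then show ?thesis by (auto intro!: sum_nonneg)
  next
    case False
    have "prob_tail0 n d v = real (card A) / real (card (DS N N d))"
      unfolding prob_tail0_def A_def deg_funs_DS N_def by simp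
    also have "\<dots> \<le> (\<Sum>ys\<in>L. real (card (C ys))) / real (card (DS N N d))"
    proof (rule divide_right_mono)
      have "real (card A) \<le> real (\<Sum>ys\<in>L. card (C ys))" using cardA by (simp only: of_nat_le_iff)
      then show "real (card A) \<le> (\<Sum>ys\<in>L. real (card (C ys)))" by (simp only: of_nat_sum)
    qed simp
    also have "\<dots> = (\<Sum>ys\<in>L. real (d v) * real (prod_list (map d ys)) / real (ff n (Suc (length ys))))"
      using False by (simp add: sum_divide_distrib cardC)
    finally show ?thesis unfolding L_def M_def N_def .
  qed
qed


lemma aux_frac: "(a::real) > 0 \<Longrightarrow> b > 0 \<Longrightarrow> a * b = N \<Longrightarrow> x * (p / a) = p * (x * b / N)"
  by (drule sym) (simp add: field_simps)

lemma sum_to_integral: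
  fixes n v :: nat and d :: "nat \<Rightarrow> nat"
  assumes v: "v \<in> {1..n}"
  shows "((\<lambda>t. \<Prod>i\<in>{1..n} - {v}. real (d i) * t + (1 - t)) has_integral
     (\<Sum>ys\<in>{ys. distinct ys \<and> set ys \<subseteq> {1..n} - {v}}. real (prod_list (map d ys)) / real (ff n (Suc (length ys))))) {0..1}"
proof -
  define M where "M = {1..n} - {v}"
  have finM: "finite M" unfolding M_def by simp
  have cM: "card M = n - 1" unfolding M_def using v by simp
  have n1: "n \<ge> 1" using v by simp
  define F where "F ys = real (prod_list (map d ys)) / real (ff n (Suc (length ys)))" for ys
  define c where "c J = real (prod d J) * (fact (card J) * fact (n - 1 - card J) / fact n)" for J
  have cJ: "card J \<le> n - 1" if "J \<in> Pow M" for J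
    using that finM cM by (metis PowD card_mono)
  have sumeq: "(\<Sum>ys\<in>{ys. distinct ys \<and> set ys \<subseteq> M}. F ys) = (\<Sum>J\<in>Pow M. c J)"
  proof -
    have "(\<Sum>ys\<in>{ys. distinct ys \<and> set ys \<subseteq> M}. F ys) = (\<Sum>ys\<in>(\<Union>J\<in>Pow M. permutations_of_set J). F ys)"
      by (simp only: L_eq[OF finM])
    also have "\<dots> = (\<Sum>J\<in>Pow M. \<Sum>ys\<in>permutations_of_set J. F ys)"
    proof (rule sum.UNION_disjoint)
      show "finite (Pow M)" using finM by simp
      show "\<forall>J\<in>Pow M. finite (permutations_of_set J)" by simp
      show "\<forall>J\<in>Pow M. \<forall>J'\<in>Pow M. J \<noteq> J' \<longrightarrow> permutations_of_set J \<inter> permutations_of_set J' = {}"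
        by (auto simp: permutations_of_set_def)
    qed
    also have "\<dots> = (\<Sum>J\<in>Pow M. c J)"
    proof (rule sum.cong[OF refl])
      fix J assume J: "J \<in> Pow M"
      have finJ: "finite J" using J finM by (auto intro: finite_subset)
      have jle: "Suc (card J) \<le> n" using cJ[OF J] n1 by linarith
      have Fv: "F ys = real (prod d J) / real (ff n (Suc (card J)))" if "ys \<in> permutations_of_set J" for ys
      proof -
        have "set ys = J" "distinct ys" using that by (auto simp: permutations_of_set_def)
        then have "prod_list (map d ys) = prod d J" "length ys = card J"
          by (auto simp: prod.distinct_set_conv_list distinct_card)
        then show ?thesis unfolding F_def by simp
      qed
      have "(\<Sum>ys\<in>permutations_of_set J. F ys) = fact (card J) * (real (prod d J) / real (ff n (Suc (card J))))"
        using Fv finJ by (simp add: sum.cong[OF refl Fv])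
      also have "\<dots> = c J"
      proof -
        have e: "n - Suc (card J) = n - 1 - card J" by simp
        have ff: "ff n (Suc (card J)) * fact (n - 1 - card J) = (fact n :: nat)"
          using ff_fact[OF jle] unfolding e .
        have r: "real (ff n (Suc (card J))) * fact (n - 1 - card J) = fact n"
          by (metis ff of_nat_fact of_nat_mult)
        have pos: "real (ff n (Suc (card J))) > 0" using ff_pos[OF jle] by simp
        show ?thesis unfolding c_def by (rule aux_frac[OF pos _ r]) simp
      qed
      finally show "(\<Sum>ys\<in>permutations_of_set J. F ys) = c J" .
    qed
    finally show ?thesis .
  qed
  have integ: "((\<lambda>t. \<Sum>J\<in>Pow M. real (prod d J) * (t ^ card J * (1 - t) ^ (n - 1 - card J))) has_integral
        (\<Sum>J\<in>Pow M. c J)) {0..1}"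
  proof (rule has_integral_sum)
    show "finite (Pow M)" using finM by simp
    fix J assume J: "J \<in> Pow M"
    have e: "card J + (n - 1 - card J) + 1 = n" using cJ[OF J] n1 by linarith
    show "((\<lambda>t. real (prod d J) * (t ^ card J * (1 - t) ^ (n - 1 - card J))) has_integral c J) {0..1}"
      unfolding c_def using has_integral_mult_right[OF beta_nat[of "card J" "n - 1 - card J"], of "real (prod d J)"]
      by (simp only: e)
  qed
  have funeq: "(\<Sum>J\<in>Pow M. real (prod d J) * (t ^ card J * (1 - t) ^ (n - 1 - card J))) =
      (\<Prod>i\<in>M. real (d i) * t + (1 - t))" for t :: real
  proof -
    have "(\<Prod>i\<in>M. real (d i) * t + (1 - t)) = (\<Sum>X\<in>Pow M. (\<Prod>i\<in>X. real (d i) * t) * (\<Prod>i\<in>M - X. 1 - t))"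
      by (rule prod_add[OF finM])
    also have "\<dots> = (\<Sum>J\<in>Pow M. real (prod d J) * (t ^ card J * (1 - t) ^ (n - 1 - card J)))"
    proof (rule sum.cong[OF refl])
      fix X assume X: "X \<in> Pow M"
      have finX: "finite X" using X finM by (auto intro: finite_subset)
      have "(\<Prod>i\<in>X. real (d i) * t) = real (prod d X) * t ^ card X"
        by (simp add: prod.distrib)
      moreover have "(\<Prod>i\<in>M - X. 1 - t) = (1 - t) ^ (n - 1 - card X)"
        using X finX by (simp add: card_Diff_subset cM)
      ultimately show "(\<Prod>i\<in>X. real (d i) * t) * (\<Prod>i\<in>M - X. 1 - t) =
          real (prod d X) * (t ^ card X * (1 - t) ^ (n - 1 - card X))" by simp
    qed
    finally show ?thesis by simp
  qed
  have fe: "(\<lambda>t. \<Sum>J\<in>Pow M. real (prod d J) * (t ^ card J * (1 - t) ^ (n - 1 - card J))) =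
      (\<lambda>t. \<Prod>i\<in>M. real (d i) * t + (1 - t))" by (rule ext) (rule funeq)
  have "((\<lambda>t. \<Prod>i\<in>M. real (d i) * t + (1 - t)) has_integral
      (\<Sum>ys\<in>{ys. distinct ys \<and> set ys \<subseteq> M}. F ys)) {0..1}"
    using integ unfolding fe sumeq[symmetric] .
  then show ?thesis unfolding M_def F_def .
qed


lemma main_bound:
  fixes n v :: nat and d :: "nat \<Rightarrow> nat" and D B :: real
  assumes v: "v \<in> {1..n}" and sd: "(\<Sum>j=1..n. d j) = n" and D: "D \<ge> 1"
    and dD: "\<And>i. i \<in> {1..n} \<Longrightarrow> real (d i) \<le> D"
    and Bdef: "B = (\<Sum>i\<in>{1..n} - {v}. (real (d i) - 1)^2)" and Bpos: "B > 0"
  shows "prob_tail0 n d v \<le> real (d v) * (pi / sqrt B + exp (- (B / (4 * D^2))))"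
proof -
  define M where "M = {1..n} - {v}"
  have finM: "finite M" unfolding M_def by simp
  define I where "I = (\<Sum>ys\<in>{ys. distinct ys \<and> set ys \<subseteq> {1..n} - {v}}. real (prod_list (map d ys)) / real (ff n (Suc (length ys))))"
  have HI: "((\<lambda>t. \<Prod>i\<in>M. real (d i) * t + (1 - t)) has_integral I) {0..1}"
    unfolding I_def M_def by (rule sum_to_integral[OF v])
  have pI: "prob_tail0 n d v \<le> real (d v) * I"
    using prob_le_sum[OF v] unfolding I_def by (simp add: sum_distrib_left)
  show ?thesis
  proof (cases "d v = 0")
    case True then show ?thesis using pI by simp
  next
    case False
    define e where "e = exp (- (B / (4 * D^2)))"
    have sM: "(\<Sum>i\<in>M. real (d i) - 1) = 1 - real (d v)"
    proof -
      have "(\<Sum>j\<in>{1..n}. real (d j)) = real n" using sd by (metis of_nat_sum)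
      moreover have "(\<Sum>j\<in>{1..n}. real (d j)) = real (d v) + (\<Sum>j\<in>M. real (d j))"
        unfolding M_def using v by (simp add: sum.remove)
      moreover have "card M = n - 1" unfolding M_def using v by simp
      ultimately show ?thesis using v by (simp add: sum_subtractf of_nat_diff)
    qed
    have pw: "(\<Prod>i\<in>M. real (d i) * t + (1 - t)) \<le> 1 / (1 + B * t^2 / 4) + e"
      if t: "t \<in> {0..1}" for t :: real
    proof -
      have t0: "0 \<le> t" and t1: "t \<le> 1" using t by auto
      have "(\<Prod>i\<in>M. real (d i) * t + (1 - t)) \<le>
          (\<Prod>i\<in>M. exp ((real (d i) - 1) * t - ((real (d i) - 1) * t)^2 / (2 * (1 + D * t))))"
      proof (rule prod_mono)
        fix i assume i: "i \<in> M"
        have di: "real (d i) \<le> D" using dD i unfolding M_def by auto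
        have "real (d i) * t + (1 - t) = 1 + (real (d i) - 1) * t" by (simp add: algebra_simps)
        also have "\<dots> \<le> exp ((real (d i) - 1) * t - ((real (d i) - 1) * t)^2 / (2 * (1 + D * t)))"
        proof (rule one_plus_le_exp)
          show "0 \<le> D * t" using D t0 by simp
          show "-1 \<le> (real (d i) - 1) * t" using t0 t1 by (simp add: algebra_simps) (smt (verit) mult_nonneg_nonneg of_nat_0_le_iff)
          show "(real (d i) - 1) * t \<le> D * t" using di t0 by (intro mult_right_mono) auto
        qed
        finally show "0 \<le> real (d i) * t + (1 - t) \<and> real (d i) * t + (1 - t) \<le>
            exp ((real (d i) - 1) * t - ((real (d i) - 1) * t)^2 / (2 * (1 + D * t)))"
          using t0 t1 by (auto intro!: add_nonneg_nonneg)
      qed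
      also have "\<dots> = exp (\<Sum>i\<in>M. (real (d i) - 1) * t - ((real (d i) - 1) * t)^2 / (2 * (1 + D * t)))"
        by (simp add: exp_sum[OF finM])
      also have "(\<Sum>i\<in>M. (real (d i) - 1) * t - ((real (d i) - 1) * t)^2 / (2 * (1 + D * t)))
          = t * (1 - real (d v)) - B * t^2 / (2 * (1 + D * t))"
      proof -
        have "(\<Sum>i\<in>M. (real (d i) - 1) * t) = (\<Sum>i\<in>M. real (d i) - 1) * t"
          by (rule sum_distrib_right[symmetric])
        also have "\<dots> = t * (1 - real (d v))" unfolding sM by (rule mult.commute)
        finally have "(\<Sum>i\<in>M. (real (d i) - 1) * t) = t * (1 - real (d v))" .
        moreover have "(\<Sum>i\<in>M. ((real (d i) - 1) * t)^2 / (2 * (1 + D * t))) = B * t^2 / (2 * (1 + D * t))"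
          unfolding Bdef M_def by (simp add: power_mult_distrib sum_divide_distrib[symmetric] sum_distrib_right[symmetric])
        ultimately show ?thesis by (simp add: sum_subtractf)
      qed
      also have "exp (t * (1 - real (d v)) - B * t^2 / (2 * (1 + D * t))) \<le> exp (- (B * t^2 / (2 * (1 + D * t))))"
        using False t0 by (simp add: mult_nonneg_nonpos)
      also have "\<dots> \<le> 1 / (1 + B * t^2 / 4) + e"
        unfolding e_def by (rule exp_split_bound) (use Bpos D t0 t1 in auto)
      finally show ?thesis .
    qed
    have gI: "((\<lambda>t. 1 / (1 + B * t^2 / 4) + e) has_integral (2 / sqrt B * arctan (sqrt B / 2) + e)) {0..1}"
      using has_integral_add[OF arctan_integral[OF Bpos] has_integral_const_real[of e 0 1]] by simp
    have "I \<le> 2 / sqrt B * arctan (sqrt B / 2) + e"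
      by (rule has_integral_le[OF HI gI pw])
    also have "\<dots> \<le> pi / sqrt B + e" using arctan_integral_bound[OF Bpos] by simp
    finally have "real (d v) * I \<le> real (d v) * (pi / sqrt B + e)" by (simp add: mult_left_mono)
    then show ?thesis using pI unfolding e_def by simp
  qed
qed


lemma per_n:
  fixes n v :: nat and d :: "nat \<Rightarrow> nat" and c :: real
  assumes n3: "n \<ge> 3" and v: "v \<in> {1..n}" and sd: "(\<Sum>j=1..n. d j) = n"
    and c: "0 < c" "c \<le> 1/3"
    and Db: "real (Delta n d) \<le> c * \<bar>sqrt (real n * sigma2 n d / (ln (real n))^3)\<bar>"
  shows "prob_tail0 n d v \<le> pi * sqrt 2 * c + real n * exp (- ((ln (real n))^3))"
proof -
  define N where "N = {1..n}"
  define M where "M = N - {v}"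
  define D where "D = real (Delta n d)"
  define L where "L = ln (real n)"
  define Q where "Q = (\<Sum>i\<in>N. (real (d i) - 1)^2)"
  have finN: "finite N" unfolding N_def by simp
  have vN: "v \<in> N" using v unfolding N_def by simp
  have Nne: "N \<noteq> {}" using vN by auto
  have dD: "real (d i) \<le> D" if "i \<in> N" for i
    unfolding D_def Delta_def using that finN by (simp add: N_def)
  have dn: "d i \<le> n" if "i \<in> N" for i
    using member_le_sum[of i N d] that finN sd unfolding N_def by simp
  have Dn: "D \<le> real n"
  proof -
    have "Delta n d \<in> d ` N" unfolding Delta_def N_def using Nne finN N_def by (intro Max_in) auto
    then show ?thesis using dn unfolding D_def by auto
  qed
  have D1: "D \<ge> 1"
  proof (rule ccontr)
    assume "\<not> D \<ge> 1"
    then have "\<forall>i\<in>N. d i = 0" using dD by fastforce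
    then have "(\<Sum>j\<in>N. d j) = 0" by simp
    then show False using sd n3 unfolding N_def by simp
  qed
  have Lge: "L \<ge> 1"
  proof -
    have "exp 1 \<le> real n" using exp_le n3 by simp
    then have "ln (exp 1) \<le> ln (real n)" using n3 by (subst ln_le_cancel_iff) auto
    then show ?thesis unfolding L_def by simp
  qed
  have Qsig: "real n * sigma2 n d = Q"
  proof -
    have "real n * sigma2 n d = (\<Sum>j\<in>N. real (d j) ^ 2) - real n"
      unfolding sigma2_def N_def using n3 by (simp add: field_simps)
    moreover have "Q = (\<Sum>j\<in>N. real (d j) ^ 2) - 2 * (\<Sum>j\<in>N. real (d j)) + real (card N)"
      unfolding Q_def by (simp add: power2_diff sum.distrib sum_subtractf sum_distrib_left)
    moreover have "(\<Sum>j\<in>N. real (d j)) = real n" using sd unfolding N_def by (metis of_nat_sum)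
    moreover have "card N = n" unfolding N_def by simp
    ultimately show ?thesis by simp
  qed
  have Q0: "Q \<ge> 0" unfolding Q_def by (intro sum_nonneg) simp
  have L3: "L^3 \<ge> 1" using Lge by (simp add: one_le_power)
  have DQ: "D^2 * L^3 \<le> c^2 * Q"
  proof -
    have "D^2 \<le> (c * \<bar>sqrt (Q / L^3)\<bar>)^2"
      using Db D1 unfolding D_def[symmetric] L_def[symmetric] Qsig by (intro power_mono) auto
    also have "\<dots> = c^2 * (Q / L^3)"
    proof -
      have "Q / L^3 \<ge> 0" using Q0 L3 by (intro divide_nonneg_nonneg) linarith+
      then have "(sqrt (Q / L^3))^2 = Q / L^3" by (rule real_sqrt_pow2)
      then show ?thesis by (simp add: power_mult_distrib)
    qed
    finally have h: "D^2 \<le> c^2 * Q / L^3" by simp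
    moreover have "L^3 > 0" using L3 by linarith
    ultimately show ?thesis by (simp add: pos_le_divide_eq)
  qed
  have c2: "c^2 \<le> 1/9"
  proof -
    have "c^2 \<le> (1/3)^2" using c by (intro power_mono) auto
    then show ?thesis by (simp add: power2_eq_square)
  qed
  have D2L: "D^2 \<le> D^2 * L^3" using L3 by (simp add: mult_le_cancel_left1)
  have DcQ: "D^2 \<le> c^2 * Q" using D2L DQ by linarith
  have cQ: "c^2 * Q \<le> Q / 9" using c2 Q0 by (metis mult_right_mono mult.commute times_divide_eq_right mult_1_right divide_inverse)
  have D1sq: "D^2 \<ge> 1" using D1 by (simp add: one_le_power)
  have Q9: "Q \<ge> 9" using DcQ cQ D1sq by linarith
  define B where "B = (\<Sum>i\<in>M. (real (d i) - 1)^2)"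
  have BQ: "B = Q - (real (d v) - 1)^2"
    unfolding B_def Q_def M_def using finN vN by (simp add: sum.remove)
  have dvD: "real (d v) \<le> D" using dD[OF vN] .
  have absdv: "\<bar>real (d v) - 1\<bar> \<le> \<bar>D\<bar>" using dvD D1 by auto
  have dv2: "(real (d v) - 1)^2 \<le> D^2" using absdv by (simp add: abs_le_square_iff)
  have Bge: "B \<ge> Q / 2" using BQ dv2 DcQ cQ Q0 by linarith
  have Bpos: "B > 0" using Bge Q9 by linarith
  have dDN: "\<And>i. i \<in> {1..n} \<Longrightarrow> real (d i) \<le> D" using dD unfolding N_def by simp
  have Bdef': "B = (\<Sum>i\<in>{1..n} - {v}. (real (d i) - 1)^2)" unfolding B_def M_def N_def ..
  have mb: "prob_tail0 n d v \<le> real (d v) * (pi / sqrt B + exp (- (B / (4 * D^2))))"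
    by (rule main_bound[OF v sd D1 dDN Bdef' Bpos])
  have t1: "real (d v) / sqrt B \<le> sqrt 2 * c"
  proof -
    have "c^2 * Q \<le> c^2 * (2 * B)" using Bge by (intro mult_left_mono) auto
    hence "D^2 \<le> 2 * c^2 * B" using DcQ by (simp add: mult_ac)
    hence "D^2 / B \<le> 2 * c^2" using Bpos by (simp add: pos_divide_le_eq)
    hence "sqrt (D^2 / B) \<le> sqrt (2 * c^2)" by (rule real_sqrt_le_mono)
    moreover have "sqrt (D^2 / B) = D / sqrt B" using D1 by (simp add: real_sqrt_divide)
    moreover have "sqrt (2 * c^2) = sqrt 2 * c" using c by (simp add: real_sqrt_mult)
    moreover have "real (d v) / sqrt B \<le> D / sqrt B" using dvD Bpos by (simp add: divide_right_mono)
    ultimately show ?thesis by linarith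
  qed
  have t2: "real (d v) * exp (- (B / (4 * D^2))) \<le> real n * exp (- (L^3))"
  proof -
    have "4 * D^2 * L^3 = 4 * (D^2 * L^3)" by simp
    hence "4 * D^2 * L^3 \<le> B" using DQ cQ Bge Q0 by linarith
    moreover have "0 < 4 * D^2" using D1 by simp
    ultimately have "L^3 \<le> B / (4 * D^2)" by (subst pos_le_divide_eq) (auto simp: mult.commute)
    hence "exp (- (B / (4 * D^2))) \<le> exp (- (L^3))" by simp
    moreover have "real (d v) \<le> real n" using dvD Dn by linarith
    ultimately show ?thesis by (intro mult_mono) auto
  qed
  have "real (d v) * (pi / sqrt B + exp (- (B / (4 * D^2)))) =
      pi * (real (d v) / sqrt B) + real (d v) * exp (- (B / (4 * D^2)))"
    by (simp add: algebra_simps)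
  also have "\<dots> \<le> pi * (sqrt 2 * c) + real n * exp (- (L^3))"
    using t1 t2 by (intro add_mono mult_left_mono) auto
  finally show ?thesis using mb unfolding L_def by (simp add: mult.assoc)
qed


lemma asy: "(\<lambda>n::nat. real n * exp (- ((ln (real n))^3))) \<longlonglongrightarrow> 0"
  by real_asymp

theorem corollary3p14:
  fixes d :: "nat \<Rightarrow> nat \<Rightarrow> nat" and v :: "nat \<Rightarrow> nat"
  assumes deg: "\<And>n. is_degree_seq n (d n)"
    and vn: "\<And>n. n \<ge> 1 \<Longrightarrow> v n \<in> {1..n}"
    and s_upper: "(\<lambda>n. sigma2 n (d n)) \<in> o(\<lambda>n. real n / (ln (real n)) ^ 3)"
    and s_lower: "(\<lambda>n. ln (real n) / real n powr (1/3)) \<in> o(\<lambda>n. sigma2 n (d n))"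
    and Delta_bound: "(\<lambda>n. real (Delta n (d n))) \<in>
        o(\<lambda>n. sqrt (real n * sigma2 n (d n) / (ln (real n)) ^ 3))"
  shows "(\<lambda>n. prob_tail0 n (d n) (v n)) \<longlonglongrightarrow> 0"
proof (rule tendstoI)
  fix e :: real assume e: "e > 0"
  define c where "c = min (1/3) (e / 20)"
  have c0: "c > 0" and c3: "c \<le> 1/3" and ce: "c \<le> e / 20" using e unfolding c_def by auto
  have ev1: "eventually (\<lambda>n. n \<ge> 3) sequentially" by (rule eventually_ge_at_top)
  have ev2: "eventually (\<lambda>n. norm (real (Delta n (d n))) \<le>
      c * norm (sqrt (real n * sigma2 n (d n) / (ln (real n)) ^ 3))) sequentially"
    using landau_o.smallD[OF Delta_bound c0] by simp
  have ev3: "eventually (\<lambda>n. real n * exp (- ((ln (real n))^3)) < e / 2) sequentially"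
    using order_tendstoD(2)[OF asy, of "e/2"] e by simp
  have pc: "pi * sqrt 2 * c < e / 2"
  proof -
    have "sqrt 2 < 3/2" by (rule real_less_lsqrt) (auto simp: power2_eq_square)
    hence "pi * sqrt 2 < 4 * (3/2)" using pi_less_4 pi_gt_zero by (intro mult_strict_mono) auto
    hence "pi * sqrt 2 * c \<le> 6 * c" using c0 by (intro mult_right_mono) auto
    also have "\<dots> < e / 2" using ce e by linarith
    finally show ?thesis .
  qed
  show "eventually (\<lambda>n. dist (prob_tail0 n (d n) (v n)) 0 < e) sequentially"
    using ev1 ev2 ev3
  proof eventually_elim
    case (elim n)
    have vn': "v n \<in> {1..n}" using vn elim(1) by simp
    have sd: "(\<Sum>j=1..n. d n j) = n" using deg[of n] unfolding is_degree_seq_def .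
    have Db: "real (Delta n (d n)) \<le> c * \<bar>sqrt (real n * sigma2 n (d n) / (ln (real n))^3)\<bar>"
      using elim(2) by simp
    have "prob_tail0 n (d n) (v n) \<le> pi * sqrt 2 * c + real n * exp (- ((ln (real n))^3))"
      by (rule per_n[OF elim(1) vn' sd c0 c3 Db])
    moreover have "prob_tail0 n (d n) (v n) \<ge> 0" unfolding prob_tail0_def by simp
    ultimately show ?case using pc elim(3) by simp
  qed
qed
end
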